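(* Let $y(x,\lambda)$ satisfy the Shin-Zettl system $y'(x,\lambda)=F(x,\lambda)y(x,\lambda)$, $F(x,\lambda)=\begin{bmatrix} r_1(x) & p(x)^{-1}\\ q(x)-\lambda\omega(x) & r_2(x)\end{bmatrix}$, on $[0,\ell)$, where $p^{-1},q,r_1,r_2,\omega$ are locally summable. Fix $n\in\mathbb N$, $n\times n$ matrices $A_1,A_2,S(0)$ and $n\times 2$ matrices $\Pi_1(0),\Pi_2(0)$ with $A_1S(0)-S(0)A_2=\Pi_1(0)\Pi_2(0)^*$. Set $Q_1=\begin{bmatrix}0&0\\ \omega&0\end{bmatrix}$, $Q_0=-\begin{bmatrix} r_1 & p^{-1}\\ q & r_2\end{bmatrix}$ and define $\Pi_1,\Pi_2,S$ by $$\Pi_1'=A_1\Pi_1Q_1+\Pi_1Q_0,\quad (\Pi_2^* )'=-Q_1\Pi_2^*A_2-Q_0\Pi_2^*,\quad S'=\Pi_1Q_1\Pi_2^*.$$ Let $w_A(x,\lambda)=I_2-\Pi_2(x)^*S(x)^{-1}(A_1-\lambda I_n)^{-1}\Pi_1(x)$ and $X(x)=\Pi_2(x)^*S(x)^{-1}\Pi_1(x)$ with entries $X_{ik}$. Then, at the points of invertibility of $S(x)$, the function $\widetilde y(x,\lambda)=w_A(x,\lambda)y(x,\lambda)$ satisfies the transformed Shin-Zettl system $\widetilde y'=\widetilde F\widetilde y$ with $$\widetilde F(x,\lambda)=\begin{bmatrix}\widetilde r_1(x) & p(x)^{-1}\\ \widetilde q(x)-\lambda\omega(x) & \widetilde r_2(x)\end{bmatrix},$$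 $$\widetilde r_1=r_1-\omega X_{12},\quad \widetilde r_2=r_2+\omega X_{12},\quad \widetilde q=q+\omega(X_{11}-X_{22}).$$ *)

theory Defs
  imports "HOL-Analysis.Analysis"
begin

definition mat2 :: "'a \<Rightarrow> 'a \<Rightarrow> 'a \<Rightarrow> 'a \<Rightarrow> 'a^2^2" where
  "mat2 a b c d = (\<chi> i j. if i = 1 then (if j = 1 then a else b) else (if j = 1 then c else d))"

definition mat_star :: "complex^'m^'n \<Rightarrow> complex^'n^'m" where
  "mat_star M = (\<chi> i j. cnj (M $ j $ i))"

text \<open>Solution of g' = G in the Caratheodory (absolutely continuous) sense on the
  interval I: G is Lebesgue integrable on every compact subinterval of I and
  g(b) - g(a) is the integral of G over [a,b].\<close>
definition ac_solution_on :: "real set \<Rightarrow> (real \<Rightarrow> 'a::euclidean_space) \<Rightarrow> (real \<Rightarrow> 'a) \<Rightarrow> bool" where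
  "ac_solution_on I g G \<longleftrightarrow>
     (\<forall>a\<in>I. \<forall>b\<in>I. a \<le> b \<longrightarrow>
        G absolutely_integrable_on {a..b} \<and> g b - g a = integral {a..b} G)"

definition locally_summable_on :: "real set \<Rightarrow> (real \<Rightarrow> complex) \<Rightarrow> bool" where
  "locally_summable_on I f \<longleftrightarrow> (\<forall>a\<in>I. \<forall>b\<in>I. a \<le> b \<longrightarrow> f absolutely_integrable_on {a..b})"

end

theory Submission
  imports Defs
begin


lemma norm_le_eps_zero:
  fixes x :: "'a::real_normed_vector"
  assumes "\<And>e. e > 0 \<Longrightarrow> norm x \<le> e * C"
  shows "x = 0"
proof (rule ccontr)
  assume "x \<noteq> 0"
  then have nx: "norm x > 0" by simp
  define e where "e = norm x / (\<bar>C\<bar> + 1)"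
  have e: "e > 0" using nx by (simp add: e_def)
  have "norm x \<le> e * C" using assms[OF e] .
  also have "\<dots> \<le> e * \<bar>C\<bar>" using e by (simp add: mult_left_mono)
  also have "\<dots> < norm x" using nx by (simp add: e_def field_simps)
  finally show False by simp
qed

lemma KL:
  fixes \<Phi> \<Psi> :: "real \<Rightarrow> 'a::euclidean_space" and \<rho> :: "real \<Rightarrow> real"
  assumes ab: "a \<le> b" and intP: "\<Psi> integrable_on {a..b}" and intR: "\<rho> integrable_on {a..b}"
    and loc: "\<And>e. e > 0 \<Longrightarrow> \<exists>d>0. \<forall>u v. a \<le> u \<longrightarrow> u \<le> v \<longrightarrow> v \<le> b \<longrightarrow> v - u < d \<longrightarrow>
        norm (\<Phi> v - \<Phi> u - integral {u..v} \<Psi>) \<le> e * integral {u..v} \<rho>"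
  shows "\<Phi> b - \<Phi> a = integral {a..b} \<Psi>"
proof -
  have "norm (\<Phi> b - \<Phi> a - integral {a..b} \<Psi>) \<le> e * integral {a..b} \<rho>" if e: "e > 0" for e
  proof -
    obtain d where d: "d > 0" and dl: "\<And>u v. a \<le> u \<Longrightarrow> u \<le> v \<Longrightarrow> v \<le> b \<Longrightarrow> v - u < d \<Longrightarrow>
        norm (\<Phi> v - \<Phi> u - integral {u..v} \<Psi>) \<le> e * integral {u..v} \<rho>"
      using loc[OF e] by blast
    have claim: "\<forall>u v. a \<le> u \<longrightarrow> u \<le> v \<longrightarrow> v \<le> b \<longrightarrow> v - u \<le> real n * (d/2) \<longrightarrow>
        norm (\<Phi> v - \<Phi> u - integral {u..v} \<Psi>) \<le> e * integral {u..v} \<rho>" for n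
    proof (induction n)
      case 0
      then show ?case using d dl by force
    next
      case (Suc n)
      show ?case
      proof (intro allI impI)
        fix u v assume uv: "a \<le> u" "u \<le> v" "v \<le> b" "v - u \<le> real (Suc n) * (d/2)"
        show "norm (\<Phi> v - \<Phi> u - integral {u..v} \<Psi>) \<le> e * integral {u..v} \<rho>"
        proof (cases "v - u < d")
          case True then show ?thesis using dl uv by blast
        next
          case False
          define m where "m = u + d/2"
          have m: "u \<le> m" "m \<le> v" "v - m \<le> real n * (d/2)" "m - u < d"
            using False d uv by (auto simp: m_def algebra_simps)
          have iP: "\<Psi> integrable_on {u..v}" 
            by (rule integrable_subinterval_real[OF intP]) (use uv in auto)
          have iR: "\<rho> integrable_on {u..v}" 
            by (rule integrable_subinterval_real[OF intR]) (use uv in auto)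
          have cP: "integral {u..m} \<Psi> + integral {m..v} \<Psi> = integral {u..v} \<Psi>"
            by (rule Henstock_Kurzweil_Integration.integral_combine[OF m(1,2) iP])
          have cR: "integral {u..m} \<rho> + integral {m..v} \<rho> = integral {u..v} \<rho>"
            by (rule Henstock_Kurzweil_Integration.integral_combine[OF m(1,2) iR])
          have h1: "norm (\<Phi> m - \<Phi> u - integral {u..m} \<Psi>) \<le> e * integral {u..m} \<rho>"
            using dl[of u m] m uv by auto
          have h2: "norm (\<Phi> v - \<Phi> m - integral {m..v} \<Psi>) \<le> e * integral {m..v} \<rho>"
            using Suc.IH m uv by auto
          have "\<Phi> v - \<Phi> u - integral {u..v} \<Psi> = (\<Phi> m - \<Phi> u - integral {u..m} \<Psi>) + (\<Phi> v - \<Phi> m - integral {m..v} \<Psi>)"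
            using cP by (simp add: algebra_simps)
          then have "norm (\<Phi> v - \<Phi> u - integral {u..v} \<Psi>) \<le> norm (\<Phi> m - \<Phi> u - integral {u..m} \<Psi>) + norm (\<Phi> v - \<Phi> m - integral {m..v} \<Psi>)"
            by (metis norm_triangle_ineq)
          also have "\<dots> \<le> e * integral {u..m} \<rho> + e * integral {m..v} \<rho>" using h1 h2 by simp
          also have "\<dots> = e * integral {u..v} \<rho>" using cR by (simp add: distrib_left[symmetric])
          finally show ?thesis .
        qed
      qed
    qed
    obtain n :: nat where n: "(b - a) / (d/2) \<le> real n" using real_arch_simple by blast
    have "b - a \<le> real n * (d/2)" using n d by (simp add: field_simps)
    then show ?thesis using claim[of n] ab by auto
  qed
  then have "\<Phi> b - \<Phi> a - integral {a..b} \<Psi> = 0" by (rule norm_le_eps_zero)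
  then show ?thesis by simp
qed


lemma ac_cont:
  assumes "ac_solution_on {a..b} g G"
  shows "continuous_on {a..b} g"
proof (cases "a \<le> b")
  case True
  have eq: "\<And>x. x \<in> {a..b} \<Longrightarrow> g x = g a + integral {a..x} G"
    using assms True unfolding ac_solution_on_def by (metis add.commute atLeastAtMost_iff diff_add_cancel order_refl)
  have "G absolutely_integrable_on {a..b}" using assms True unfolding ac_solution_on_def by (meson atLeastAtMost_iff order_refl)
  then have "G integrable_on {a..b}" by (rule set_lebesgue_integral_eq_integral(1))
  then have "continuous_on {a..b} (\<lambda>x. g a + integral {a..x} G)"
    by (intro continuous_on_add continuous_on_const indefinite_integral_continuous_1)
  then show ?thesis by (rule continuous_on_eq) (rule eq[symmetric])
next
  case False then show ?thesis by simp
qed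
lemma ac_absint:
  assumes "ac_solution_on {a..b} g G" "a \<le> u" "u \<le> v" "v \<le> b"
  shows "G absolutely_integrable_on {u..v}" "g v - g u = integral {u..v} G"
  using assms unfolding ac_solution_on_def by auto

lemma bprod_absint1:
  fixes h :: "'a::euclidean_space \<Rightarrow> 'b::euclidean_space \<Rightarrow> 'c::euclidean_space" and u v :: real
  assumes h: "bilinear h" and f: "continuous_on {u..v} f" and G: "G absolutely_integrable_on {u..v}"
  shows "(\<lambda>t. h (f t) (G t)) absolutely_integrable_on {u..v}"
proof -
  have S: "{u..v} \<in> sets lebesgue" by simp
  have m: "f \<in> borel_measurable (lebesgue_on {u..v})"
    by (rule continuous_imp_measurable_on_sets_lebesgue[OF f S])
  have bd: "bounded (f ` {u..v})"
    by (rule compact_imp_bounded, rule compact_continuous_image[OF f]) auto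
  show ?thesis
    by (rule absolutely_integrable_bounded_measurable_product[OF h m S bd G])
qed

lemma bprod_absint2:
  fixes h :: "'a::euclidean_space \<Rightarrow> 'b::euclidean_space \<Rightarrow> 'c::euclidean_space" and u v :: real
  assumes h: "bilinear h" and f: "continuous_on {u..v} f" and G: "G absolutely_integrable_on {u..v}"
  shows "(\<lambda>t. h (G t) (f t)) absolutely_integrable_on {u..v}"
proof -
  have h': "bilinear (\<lambda>x y. h y x)" using h unfolding bilinear_def by blast
  show ?thesis using bprod_absint1[OF h' f G] .
qed




lemma ucont_real:
  fixes f :: "real \<Rightarrow> 'a::real_normed_vector"
  assumes f: "continuous_on {a..b} f" and e: "e > 0"
  shows "\<exists>d>0. \<forall>x\<in>{a..b}. \<forall>y\<in>{a..b}. \<bar>x - y\<bar> < d \<longrightarrow> norm (f x - f y) \<le> e"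
proof -
  have "uniformly_continuous_on {a..b} f" by (rule compact_uniformly_continuous[OF f]) simp
  then obtain d where d: "d > 0" "\<forall>x\<in>{a..b}. \<forall>x'\<in>{a..b}. dist x' x < d \<longrightarrow> dist (f x') (f x) < e"
    using e unfolding uniformly_continuous_on_def by blast
  show ?thesis
    by (rule exI[of _ d]) (use d in \<open>auto simp: dist_norm intro: less_imp_le\<close>)
qed

lemma bl_left: "bilinear h \<Longrightarrow> bounded_linear (\<lambda>x. h x c)"
  for h :: "'a::euclidean_space \<Rightarrow> 'b::euclidean_space \<Rightarrow> 'c::euclidean_space"
  by (simp add: bilinear_conv_bounded_bilinear bounded_bilinear.bounded_linear_left)

lemma bl_right: "bilinear h \<Longrightarrow> bounded_linear (\<lambda>y. h c y)"
  for h :: "'a::euclidean_space \<Rightarrow> 'b::euclidean_space \<Rightarrow> 'c::euclidean_space"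
  by (simp add: bilinear_conv_bounded_bilinear bounded_bilinear.bounded_linear_right)

lemma ac_prod:
  fixes h :: "'a::euclidean_space \<Rightarrow> 'b::euclidean_space \<Rightarrow> 'c::euclidean_space"
  assumes h: "bilinear h" and g: "ac_solution_on {a..b} g G" and k: "ac_solution_on {a..b} k K"
  shows "ac_solution_on {a..b} (\<lambda>x. h (g x) (k x)) (\<lambda>x. h (G x) (k x) + h (g x) (K x))"
  unfolding ac_solution_on_def
proof (intro ballI impI)
  fix a' b' assume a': "a' \<in> {a..b}" "b' \<in> {a..b}" "a' \<le> b'"
  obtain C where C: "C > 0" "\<And>x y. norm (h x y) \<le> C * norm x * norm y"
    using bilinear_bounded_pos[OF h] by blast
  have cg: "continuous_on {u..v} g" and ck: "continuous_on {u..v} k"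
    if "a' \<le> u" "v \<le> b'" for u v
    using continuous_on_subset[OF ac_cont[OF g]] continuous_on_subset[OF ac_cont[OF k]] that a' by auto
  have GA: "G absolutely_integrable_on {u..v}" and KA: "K absolutely_integrable_on {u..v}"
    and gi: "g v - g u = integral {u..v} G" and ki: "k v - k u = integral {u..v} K"
    if "a' \<le> u" "u \<le> v" "v \<le> b'" for u v
    using ac_absint[OF g, of u v] ac_absint[OF k, of u v] that a' by auto
  have A1: "(\<lambda>x. h (G x) (k x)) absolutely_integrable_on {u..v}"
    and A2: "(\<lambda>x. h (g x) (K x)) absolutely_integrable_on {u..v}"
    if "a' \<le> u" "u \<le> v" "v \<le> b'" for u v
    using bprod_absint2[OF h ck GA] bprod_absint1[OF h cg KA] that by auto
  have absint: "(\<lambda>x. h (G x) (k x) + h (g x) (K x)) absolutely_integrable_on {u..v}"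
    if "a' \<le> u" "u \<le> v" "v \<le> b'" for u v
    using set_integral_add(1)[OF A1 A2] that by auto
  show "(\<lambda>x. h (G x) (k x) + h (g x) (K x)) absolutely_integrable_on {a'..b'} \<and>
        h (g b') (k b') - h (g a') (k a') = integral {a'..b'} (\<lambda>x. h (G x) (k x) + h (g x) (K x))"
  proof
    show "(\<lambda>x. h (G x) (k x) + h (g x) (K x)) absolutely_integrable_on {a'..b'}"
      using absint a' by auto
    define \<rho> where "\<rho> = (\<lambda>t. C * (norm (G t) + norm (K t)))"
    have nGK: "(\<lambda>t. norm (G t)) integrable_on {a'..b'}" "(\<lambda>t. norm (K t)) integrable_on {a'..b'}"
      using GA[of a' b'] KA[of a' b'] a' absolutely_integrable_on_def by auto
    have rhoi: "\<rho> integrable_on {a'..b'}"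
      unfolding \<rho>_def using integrable_on_cmult_left[OF integrable_add[OF nGK], of C] by simp
    show "h (g b') (k b') - h (g a') (k a') = integral {a'..b'} (\<lambda>x. h (G x) (k x) + h (g x) (K x))"
    proof (rule KL[OF a'(3) set_lebesgue_integral_eq_integral(1)[OF absint[OF order_refl a'(3) order_refl]] rhoi])
      fix e :: real assume e: "e > 0"
      obtain d1 where d1: "d1 > 0" "\<forall>x\<in>{a'..b'}. \<forall>y\<in>{a'..b'}. \<bar>x - y\<bar> < d1 \<longrightarrow> norm (g x - g y) \<le> e"
        using ucont_real[OF cg[of a' b'] e] by auto
      obtain d2 where d2: "d2 > 0" "\<forall>x\<in>{a'..b'}. \<forall>y\<in>{a'..b'}. \<bar>x - y\<bar> < d2 \<longrightarrow> norm (k x - k y) \<le> e"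
        using ucont_real[OF ck[of a' b'] e] by auto
      show "\<exists>d>0. \<forall>u v. a' \<le> u \<longrightarrow> u \<le> v \<longrightarrow> v \<le> b' \<longrightarrow> v - u < d \<longrightarrow>
          norm (h (g v) (k v) - h (g u) (k u) - integral {u..v} (\<lambda>x. h (G x) (k x) + h (g x) (K x))) \<le> e * integral {u..v} \<rho>"
      proof (intro exI[of _ "min d1 d2"] conjI allI impI)
        show "min d1 d2 > 0" using d1 d2 by simp
        fix u v assume uv: "a' \<le> u" "u \<le> v" "v \<le> b'" "v - u < min d1 d2"
        have Gi: "G integrable_on {u..v}" and Ki: "K integrable_on {u..v}"
          using set_lebesgue_integral_eq_integral(1)[OF GA] set_lebesgue_integral_eq_integral(1)[OF KA] uv by auto
        have i1: "(\<lambda>t. h (G t) (k v)) integrable_on {u..v}"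
          using integrable_linear[OF Gi bl_left[OF h]] by (simp add: o_def)
        have i3: "(\<lambda>t. h (g u) (K t)) integrable_on {u..v}"
          using integrable_linear[OF Ki bl_right[OF h]] by (simp add: o_def)
        have i2: "(\<lambda>t. h (G t) (k t)) integrable_on {u..v}"
          using set_lebesgue_integral_eq_integral(1)[OF A1] uv by auto
        have i4: "(\<lambda>t. h (g t) (K t)) integrable_on {u..v}"
          using set_lebesgue_integral_eq_integral(1)[OF A2] uv by auto
        have e2: "h (integral {u..v} G) (k v) = integral {u..v} (\<lambda>t. h (G t) (k v))"
          using integral_linear[OF Gi bl_left[OF h]] by (simp add: o_def)
        have e3: "h (g u) (integral {u..v} K) = integral {u..v} (\<lambda>t. h (g u) (K t))"
          using integral_linear[OF Ki bl_right[OF h]] by (simp add: o_def)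
        have "h (g v) (k v) - h (g u) (k u) = h (g v - g u) (k v) + h (g u) (k v - k u)"
          by (simp add: bilinear_lsub[OF h] bilinear_rsub[OF h])
        also have "\<dots> = integral {u..v} (\<lambda>t. h (G t) (k v)) + integral {u..v} (\<lambda>t. h (g u) (K t))"
          using gi[of u v] ki[of u v] uv e2 e3 by simp
        finally have j0: "h (g v) (k v) - h (g u) (k u) = integral {u..v} (\<lambda>t. h (G t) (k v)) + integral {u..v} (\<lambda>t. h (g u) (K t))" .
        have j1: "integral {u..v} (\<lambda>x. h (G x) (k x) + h (g x) (K x)) = integral {u..v} (\<lambda>x. h (G x) (k x)) + integral {u..v} (\<lambda>x. h (g x) (K x))"
          by (rule integral_add[OF i2 i4])
        have j2: "integral {u..v} (\<lambda>t. (h (G t) (k v) - h (G t) (k t)) + (h (g u) (K t) - h (g t) (K t)))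
           = (integral {u..v} (\<lambda>t. h (G t) (k v)) - integral {u..v} (\<lambda>x. h (G x) (k x))) + (integral {u..v} (\<lambda>t. h (g u) (K t)) - integral {u..v} (\<lambda>x. h (g x) (K x)))"
          by (simp only: integral_add[OF integrable_diff[OF i1 i2] integrable_diff[OF i3 i4]] integral_diff[OF i1 i2] integral_diff[OF i3 i4])
        have "h (g v) (k v) - h (g u) (k u) - integral {u..v} (\<lambda>x. h (G x) (k x) + h (g x) (K x))
            = integral {u..v} (\<lambda>t. (h (G t) (k v) - h (G t) (k t)) + (h (g u) (K t) - h (g t) (K t)))"
          unfolding j0 j1 j2 by (simp add: algebra_simps)
        also have "norm \<dots> \<le> integral {u..v} (\<lambda>t. e * \<rho> t)"
        proof (rule integral_norm_bound_integral)
          show "(\<lambda>t. (h (G t) (k v) - h (G t) (k t)) + (h (g u) (K t) - h (g t) (K t))) integrable_on {u..v}"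
            using i1 i2 i3 i4 by (intro integrable_add integrable_diff)
          have "\<rho> integrable_on {u..v}" by (rule integrable_subinterval_real[OF rhoi]) (use uv in auto)
          then show "(\<lambda>t. e * \<rho> t) integrable_on {u..v}" using integrable_on_cmult_left[of \<rho> "{u..v}" e] by simp
          fix t assume t: "t \<in> {u..v}"
          have tv: "t \<in> {a'..b'}" "v \<in> {a'..b'}" "u \<in> {a'..b'}" using t uv by auto
          have n1: "norm (k v - k t) \<le> e" using d2(2) tv t uv by auto
          have n2: "norm (g u - g t) \<le> e" using d1(2) tv t uv by auto
          have "(h (G t) (k v) - h (G t) (k t)) + (h (g u) (K t) - h (g t) (K t)) = h (G t) (k v - k t) + h (g u - g t) (K t)"
            by (simp add: bilinear_lsub[OF h] bilinear_rsub[OF h])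
          then have "norm ((h (G t) (k v) - h (G t) (k t)) + (h (g u) (K t) - h (g t) (K t))) \<le> norm (h (G t) (k v - k t)) + norm (h (g u - g t) (K t))"
            by (metis norm_triangle_ineq)
          also have "\<dots> \<le> C * norm (G t) * norm (k v - k t) + C * norm (g u - g t) * norm (K t)"
            using C(2) by (intro add_mono) auto
          also have "\<dots> \<le> C * norm (G t) * e + C * e * norm (K t)"
            using C(1) n1 n2 by (intro add_mono mult_left_mono mult_right_mono) auto
          also have "\<dots> = e * \<rho> t" by (simp add: \<rho>_def algebra_simps)
          finally show "norm ((h (G t) (k v) - h (G t) (k t)) + (h (g u) (K t) - h (g t) (K t))) \<le> e * \<rho> t" .
        qed
        also have "\<dots> = e * integral {u..v} \<rho>" by simp
        finally show "norm (h (g v) (k v) - h (g u) (k u) - integral {u..v} (\<lambda>x. h (G x) (k x) + h (g x) (K x))) \<le> e * integral {u..v} \<rho>" .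
      qed
    qed
  qed
qed




lemma mm_rdist: "(A + B) ** (C::'a::semiring_1^_^_) = A ** C + B ** C"
  by (vector matrix_matrix_mult_def sum.distrib[symmetric] field_simps)

lemma mm_ldist: "C ** (A + B) = C ** A + C ** (B::'a::semiring_1^_^_)"
  by (rule matrix_add_ldistrib)

lemma mm_rdiff: "(A - B) ** (C::'a::ring_1^_^_) = A ** C - B ** C"
  by (vector matrix_matrix_mult_def sum_subtractf[symmetric] field_simps)

lemma mm_ldiff: "C ** (A - B) = C ** A - C ** (B::'a::ring_1^_^_)"
  by (vector matrix_matrix_mult_def sum_subtractf[symmetric] field_simps)

lemma mm_rneg: "(- A) ** (C::'a::ring_1^_^_) = - (A ** C)"
  by (vector matrix_matrix_mult_def sum_negf[symmetric])

lemma mm_lneg: "C ** (- A) = - (C ** (A::'a::ring_1^_^_))"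
  by (vector matrix_matrix_mult_def sum_negf[symmetric])

lemma bilinear_mm: "bilinear ((**) :: complex^'n^'m \<Rightarrow> complex^'p^'n \<Rightarrow> complex^'p^'m)"
  unfolding bilinear_def linear_iff
  by (auto simp: matrix_add_ldistrib mm_rdist scalar_matrix_assoc matrix_scalar_ac)

lemma mv_scaleR: "A *v (c *\<^sub>R x) = c *\<^sub>R (A *v (x::complex^'n))"
  by (simp add: vec_eq_iff matrix_vector_mult_def scaleR_sum_right mult_scaleR_right)

lemma mv_scaleL: "(c *\<^sub>R A) *v x = c *\<^sub>R (A *v (x::complex^'n))"
  by (simp add: vec_eq_iff matrix_vector_mult_def scaleR_sum_right mult_scaleR_left)

lemma bilinear_mv: "bilinear ((*v) :: complex^'n^'m \<Rightarrow> complex^'n \<Rightarrow> complex^'m)"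
  unfolding bilinear_def linear_iff
  by (auto simp: matrix_vector_right_distrib matrix_vector_mult_add_rdistrib mv_scaleR mv_scaleL)

lemma minv: assumes "invertible (A::'a::semiring_1^'n^'m)"
  shows "A ** matrix_inv A = mat 1" "matrix_inv A ** A = mat 1"
proof -
  have "\<exists>A'. A ** A' = mat 1 \<and> A' ** A = mat 1" using assms unfolding invertible_def by blast
  from someI_ex[OF this] show "A ** matrix_inv A = mat 1" "matrix_inv A ** A = mat 1"
    unfolding matrix_inv_def by auto
qed

lemma ac_sub:
  assumes "ac_solution_on {a..b} g G" "a \<le> a'" "b' \<le> b"
  shows "ac_solution_on {a'..b'} g G"
  using assms unfolding ac_solution_on_def by auto

lemma ac_subI:
  assumes "ac_solution_on I g G" "{a..b} \<subseteq> I"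
  shows "ac_solution_on {a..b} g G"
  using assms unfolding ac_solution_on_def by blast

lemma ac_cong:
  assumes "ac_solution_on {a..b} g G" "\<And>x. x \<in> {a..b} \<Longrightarrow> G x = G' x"
  shows "ac_solution_on {a..b} g G'"
  unfolding ac_solution_on_def
proof (intro ballI impI)
  fix u v assume uv: "u \<in> {a..b}" "v \<in> {a..b}" "u \<le> v"
  have eq: "\<And>x. x \<in> {u..v} \<Longrightarrow> G x = G' x" using assms(2) uv by auto
  have "G absolutely_integrable_on {u..v}" "g v - g u = integral {u..v} G"
    using assms(1) uv unfolding ac_solution_on_def by auto
  moreover have "integral {u..v} G = integral {u..v} G'" by (rule integral_cong[OF eq])
  moreover have "(G absolutely_integrable_on {u..v}) = (G' absolutely_integrable_on {u..v})"
    by (rule set_integrable_cong) (use eq in auto)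
  ultimately show "G' absolutely_integrable_on {u..v} \<and> g v - g u = integral {u..v} G'" by simp
qed

lemma ac_gcong:
  assumes "ac_solution_on {a..b} g G" "\<And>x. x \<in> {a..b} \<Longrightarrow> g x = g' x"
  shows "ac_solution_on {a..b} g' G"
  using assms unfolding ac_solution_on_def by auto

lemma ac_const: "ac_solution_on {a..b} (\<lambda>x. c) (\<lambda>x. 0)"
  unfolding ac_solution_on_def by auto

lemma ac_add:
  assumes "ac_solution_on {a..b} g G" "ac_solution_on {a..b} k K"
  shows "ac_solution_on {a..b} (\<lambda>x. g x + k x) (\<lambda>x. G x + K x)"
  unfolding ac_solution_on_def
proof (intro ballI impI)
  fix u v assume uv: "u \<in> {a..b}" "v \<in> {a..b}" "u \<le> v"
  have g: "G absolutely_integrable_on {u..v}" "g v - g u = integral {u..v} G"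
    and k: "K absolutely_integrable_on {u..v}" "k v - k u = integral {u..v} K"
    using assms uv unfolding ac_solution_on_def by auto
  show "(\<lambda>x. G x + K x) absolutely_integrable_on {u..v} \<and> g v + k v - (g u + k u) = integral {u..v} (\<lambda>x. G x + K x)"
    using set_integral_add(1)[OF g(1) k(1)] g(2) k(2)
      integral_add[OF set_lebesgue_integral_eq_integral(1)[OF g(1)] set_lebesgue_integral_eq_integral(1)[OF k(1)]]
    by (simp add: algebra_simps)
qed

lemma ac_diff:
  assumes "ac_solution_on {a..b} g G" "ac_solution_on {a..b} k K"
  shows "ac_solution_on {a..b} (\<lambda>x. g x - k x) (\<lambda>x. G x - K x)"
  unfolding ac_solution_on_def
proof (intro ballI impI)
  fix u v assume uv: "u \<in> {a..b}" "v \<in> {a..b}" "u \<le> v"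
  have g: "G absolutely_integrable_on {u..v}" "g v - g u = integral {u..v} G"
    and k: "K absolutely_integrable_on {u..v}" "k v - k u = integral {u..v} K"
    using assms uv unfolding ac_solution_on_def by auto
  show "(\<lambda>x. G x - K x) absolutely_integrable_on {u..v} \<and> g v - k v - (g u - k u) = integral {u..v} (\<lambda>x. G x - K x)"
    using set_integral_diff(1)[OF g(1) k(1)] g(2) k(2)
      integral_diff[OF set_lebesgue_integral_eq_integral(1)[OF g(1)] set_lebesgue_integral_eq_integral(1)[OF k(1)]]
    by (simp add: algebra_simps)
qed

lemma ac_neg:
  assumes "ac_solution_on {a..b} g G"
  shows "ac_solution_on {a..b} (\<lambda>x. - g x) (\<lambda>x. - G x)"
  using ac_diff[OF ac_const[of a b 0] assms] by simp




lemma mm_bound: "\<exists>K>0. \<forall>(X::complex^'n^'n) (Y::complex^'n^'n). norm (X ** Y) \<le> K * norm X * norm Y"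
  using bilinear_bounded_pos[OF bilinear_mm] by blast

lemma norm3:
  fixes X Y Z :: "complex^'n^'n"
  assumes K: "\<forall>(X::complex^'n^'n) (Y::complex^'n^'n). norm (X ** Y) \<le> K * norm X * norm Y" "K > 0"
  shows "norm (X ** Y ** Z) \<le> K * K * norm X * norm Y * norm Z"
proof -
  have "norm (X ** Y ** Z) \<le> K * norm (X ** Y) * norm Z" using K by blast
  also have "\<dots> \<le> K * (K * norm X * norm Y) * norm Z"
    using K by (intro mult_right_mono mult_left_mono) auto
  finally show ?thesis by (simp add: mult_ac)
qed

lemma inv_diff:
  fixes A A' :: "complex^'n^'n"
  assumes "invertible A" "invertible A'"
  shows "matrix_inv A' - matrix_inv A = - (matrix_inv A' ** (A' - A) ** matrix_inv A)"
proof -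
  have "matrix_inv A' ** (A' - A) ** matrix_inv A = (matrix_inv A' ** A' - matrix_inv A' ** A) ** matrix_inv A"
    by (simp add: mm_ldiff)
  also have "\<dots> = matrix_inv A - matrix_inv A' ** (A ** matrix_inv A)"
    by (simp add: mm_rdiff minv[OF assms(2)] matrix_mul_assoc)
  also have "\<dots> = matrix_inv A - matrix_inv A'" by (simp add: minv[OF assms(1)])
  finally show ?thesis by simp
qed

lemma inv_perturb:
  fixes A A' :: "complex^'n^'n"
  assumes inv: "invertible A" "invertible A'"
    and K: "\<forall>(X::complex^'n^'n) (Y::complex^'n^'n). norm (X ** Y) \<le> K * norm X * norm Y" "K > 0"
    and small: "K * K * norm (matrix_inv A) * norm (A' - A) \<le> 1/2"
  shows "norm (matrix_inv A' - matrix_inv A) \<le> 2 * K * K * norm (matrix_inv A)^2 * norm (A' - A)"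
proof -
  let ?B = "matrix_inv A" and ?B' = "matrix_inv A'"
  have n1: "norm (?B' - ?B) \<le> K * K * norm ?B' * norm (A' - A) * norm ?B"
    using norm3[OF K, of ?B' "A' - A" ?B] inv_diff[OF inv] by simp
  also have "\<dots> = norm ?B' * (K * K * norm ?B * norm (A' - A))" by (simp add: mult_ac)
  also have "\<dots> \<le> norm ?B' * (1/2)" using small by (intro mult_left_mono) auto
  finally have n2: "norm (?B' - ?B) \<le> norm ?B' / 2" by simp
  have "norm ?B' \<le> norm ?B + norm (?B' - ?B)" by (metis norm_triangle_sub add.commute)
  with n2 have nB: "norm ?B' \<le> 2 * norm ?B" by simp
  have "K * K * norm ?B' * norm (A' - A) * norm ?B \<le> K * K * (2 * norm ?B) * norm (A' - A) * norm ?B"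
    using nB K(2) by (intro mult_right_mono mult_left_mono) auto
  with n1 show ?thesis by (simp add: power2_eq_square mult_ac)
qed

lemma inv_cont:
  fixes S :: "real \<Rightarrow> complex^'n^'n"
  assumes cS: "continuous_on {a..b} S" and inv: "\<And>x. x \<in> {a..b} \<Longrightarrow> invertible (S x)"
  shows "continuous_on {a..b} (\<lambda>x. matrix_inv (S x))"
  unfolding continuous_on_iff
proof (intro ballI allI impI)
  fix y and e :: real assume y: "y \<in> {a..b}" and e: "0 < e"
  obtain K where K: "\<forall>(X::complex^'n^'n) (Y::complex^'n^'n). norm (X ** Y) \<le> K * norm X * norm Y" "K > 0"
    using mm_bound by blast
  define c where "c = norm (matrix_inv (S y))"
  have c: "c \<ge> 0" by (simp add: c_def)
  define \<eta> where "\<eta> = min (1/(2*K*K*(c+1))) (e/(4*K*K*(c+1)^2))"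
  have \<eta>: "\<eta> > 0" using K c e by (simp add: \<eta>_def)
  obtain d where d: "d > 0" "\<forall>x\<in>{a..b}. dist x y < d \<longrightarrow> dist (S x) (S y) < \<eta>"
    using cS \<eta> y unfolding continuous_on_iff by blast
  show "\<exists>d>0. \<forall>x'\<in>{a..b}. dist x' y < d \<longrightarrow> dist (matrix_inv (S x')) (matrix_inv (S y)) < e"
  proof (intro exI[of _ d] conjI ballI impI)
    show "d > 0" by fact
    fix x assume x: "x \<in> {a..b}" "dist x y < d"
    have ns: "norm (S x - S y) < \<eta>" using d x by (simp add: dist_norm)
    have kk: "K * K > 0" using K by simp
    have "K * K * c * norm (S x - S y) \<le> K * K * (c + 1) * \<eta>"
      using ns c kk K(2) by (intro mult_mono) auto
    also have "\<dots> \<le> K * K * (c + 1) * (1/(2*K*K*(c+1)))"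
      using kk c by (intro mult_left_mono) (auto simp: \<eta>_def)
    also have "\<dots> = 1/2"
    proof -
      have "K * K * (c + 1) \<noteq> 0" using kk c K(2) by simp
      then show ?thesis by (simp add: field_simps)
    qed
    finally have small: "K * K * norm (matrix_inv (S y)) * norm (S x - S y) \<le> 1/2" by (simp add: c_def)
    have "norm (matrix_inv (S x) - matrix_inv (S y)) \<le> 2 * K * K * c^2 * norm (S x - S y)"
      using inv_perturb[OF inv[OF y] inv[OF x(1)] K small] by (simp add: c_def)
    also have "\<dots> \<le> 2 * K * K * (c+1)^2 * \<eta>"
      using ns c kk K(2) by (intro mult_mono power_mono) auto
    also have "\<dots> \<le> 2 * K * K * (c+1)^2 * (e/(4*K*K*(c+1)^2))"
      using kk c by (intro mult_left_mono) (auto simp: \<eta>_def)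
    also have "\<dots> = e / 2"
    proof -
      have "K * K * (c + 1)^2 \<noteq> 0" using kk c K(2) by simp
      then show ?thesis by (simp add: field_simps)
    qed
    also have "\<dots> < e" using e by simp
    finally show "dist (matrix_inv (S x)) (matrix_inv (S y)) < e" by (simp add: dist_norm)
  qed
qed


lemma absint_neg: "f absolutely_integrable_on S \<Longrightarrow> (\<lambda>x. - f x) absolutely_integrable_on S"
  for f :: "'a::euclidean_space \<Rightarrow> 'b::euclidean_space"
proof -
  assume f: "f absolutely_integrable_on S"
  have "(\<lambda>x. 0 - f x) absolutely_integrable_on S" by (rule set_integral_diff(1)) (use f in auto)
  then show ?thesis by simp
qed

lemma ac_inv:
  fixes S S' :: "real \<Rightarrow> complex^'n^'n"
  assumes Sac: "ac_solution_on {a..b} S S'" and inv: "\<And>x. x \<in> {a..b} \<Longrightarrow> invertible (S x)"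
  shows "ac_solution_on {a..b} (\<lambda>x. matrix_inv (S x)) (\<lambda>x. - (matrix_inv (S x) ** S' x ** matrix_inv (S x)))"
  unfolding ac_solution_on_def
proof (intro ballI impI)
  fix a' b' assume a': "a' \<in> {a..b}" "b' \<in> {a..b}" "a' \<le> b'"
  define B where "B = (\<lambda>x. matrix_inv (S x))"
  have cB: "continuous_on {a..b} B" unfolding B_def by (rule inv_cont[OF ac_cont[OF Sac] inv])
  have cBs: "continuous_on {u..v} B" if "a' \<le> u" "v \<le> b'" for u v
    using continuous_on_subset[OF cB] that a' by auto
  have "bounded (B ` {a..b})" by (rule compact_imp_bounded, rule compact_continuous_image[OF cB]) simp
  then obtain M where M: "M > 0" "\<And>x. x \<in> {a..b} \<Longrightarrow> norm (B x) \<le> M"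
    unfolding bounded_pos by auto
  obtain K where K: "\<forall>(X::complex^'n^'n) (Y::complex^'n^'n). norm (X ** Y) \<le> K * norm X * norm Y" "K > 0"
    using mm_bound by blast
  have SA: "S' absolutely_integrable_on {u..v}" and Si: "S v - S u = integral {u..v} S'"
    if "a' \<le> u" "u \<le> v" "v \<le> b'" for u v
    using ac_absint[OF Sac, of u v] that a' by auto
  have A3: "(\<lambda>t. B t ** S' t ** B t) absolutely_integrable_on {u..v}"
    if "a' \<le> u" "u \<le> v" "v \<le> b'" for u v
    using bprod_absint2[OF bilinear_mm cBs bprod_absint1[OF bilinear_mm cBs SA]] that by auto
  have absint: "(\<lambda>t. - (B t ** S' t ** B t)) absolutely_integrable_on {u..v}"
    if "a' \<le> u" "u \<le> v" "v \<le> b'" for u v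
    using absint_neg[OF A3] that by auto
  have "(\<lambda>t. - (B t ** S' t ** B t)) absolutely_integrable_on {a'..b'} \<and>
        B b' - B a' = integral {a'..b'} (\<lambda>t. - (B t ** S' t ** B t))"
  proof
    show "(\<lambda>t. - (B t ** S' t ** B t)) absolutely_integrable_on {a'..b'}"
      using absint a' by auto
    define \<rho> where "\<rho> = (\<lambda>t. 2 * K * K * M * norm (S' t))"
    have nS: "(\<lambda>t. norm (S' t)) integrable_on {a'..b'}"
      using SA[of a' b'] a' absolutely_integrable_on_def by auto
    have rhoi: "\<rho> integrable_on {a'..b'}"
      unfolding \<rho>_def using integrable_on_cmult_left[OF nS, of "2 * K * K * M"] by simp
    show "B b' - B a' = integral {a'..b'} (\<lambda>t. - (B t ** S' t ** B t))"
    proof (rule KL[OF a'(3) set_lebesgue_integral_eq_integral(1)[OF absint[OF order_refl a'(3) order_refl]] rhoi])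
      fix e :: real assume e: "e > 0"
      obtain d where d: "d > 0" "\<forall>x\<in>{a'..b'}. \<forall>y\<in>{a'..b'}. \<bar>x - y\<bar> < d \<longrightarrow> norm (B x - B y) \<le> e"
        using ucont_real[OF cBs[of a' b'] e] by auto
      show "\<exists>d>0. \<forall>u v. a' \<le> u \<longrightarrow> u \<le> v \<longrightarrow> v \<le> b' \<longrightarrow> v - u < d \<longrightarrow>
          norm (B v - B u - integral {u..v} (\<lambda>t. - (B t ** S' t ** B t))) \<le> e * integral {u..v} \<rho>"
      proof (intro exI[of _ d] conjI allI impI)
        show "d > 0" by fact
        fix u v assume uv: "a' \<le> u" "u \<le> v" "v \<le> b'" "v - u < d"
        have uvab: "u \<in> {a..b}" "v \<in> {a..b}" using uv a' by auto
        have S'i: "S' integrable_on {u..v}"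
          using set_lebesgue_integral_eq_integral(1)[OF SA] uv by auto
        have L: "bounded_linear (\<lambda>X. B v ** X ** B u)"
          using bounded_linear_compose[OF bl_left[OF bilinear_mm, of "B u"] bl_right[OF bilinear_mm, of "B v"]] by simp
        have i1: "(\<lambda>t. B v ** S' t ** B u) integrable_on {u..v}"
          using integrable_linear[OF S'i L] by (simp add: o_def)
        have i2: "(\<lambda>t. B t ** S' t ** B t) integrable_on {u..v}"
          using set_lebesgue_integral_eq_integral(1)[OF A3] uv by auto
        have e2: "B v ** integral {u..v} S' ** B u = integral {u..v} (\<lambda>t. B v ** S' t ** B u)"
          using integral_linear[OF S'i L] by (simp add: o_def)
        have "B v - B u = - (B v ** (S v - S u) ** B u)"
          unfolding B_def by (rule inv_diff[OF inv[OF uvab(1)] inv[OF uvab(2)]])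
        also have "\<dots> = - integral {u..v} (\<lambda>t. B v ** S' t ** B u)"
          using Si[OF uv(1-3)] e2 by simp
        finally have j0: "B v - B u = - integral {u..v} (\<lambda>t. B v ** S' t ** B u)" .
        have "B v - B u - integral {u..v} (\<lambda>t. - (B t ** S' t ** B t))
            = - integral {u..v} (\<lambda>t. B v ** S' t ** B u - B t ** S' t ** B t)"
          unfolding j0 integral_neg integral_diff[OF i1 i2] by simp
        then have "norm (B v - B u - integral {u..v} (\<lambda>t. - (B t ** S' t ** B t)))
            = norm (integral {u..v} (\<lambda>t. B v ** S' t ** B u - B t ** S' t ** B t))" by simp
        also have "\<dots> \<le> integral {u..v} (\<lambda>t. e * \<rho> t)"
        proof (rule integral_norm_bound_integral)
          show "(\<lambda>t. B v ** S' t ** B u - B t ** S' t ** B t) integrable_on {u..v}"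
            using i1 i2 by (intro integrable_diff)
          have "\<rho> integrable_on {u..v}" by (rule integrable_subinterval_real[OF rhoi]) (use uv in auto)
          then show "(\<lambda>t. e * \<rho> t) integrable_on {u..v}" using integrable_on_cmult_left[of \<rho> "{u..v}" e] by simp
          fix t assume t: "t \<in> {u..v}"
          have tv: "t \<in> {a'..b'}" "v \<in> {a'..b'}" "u \<in> {a'..b'}" using t uv by auto
          have tab: "t \<in> {a..b}" using tv a' by auto
          have n1: "norm (B v - B t) \<le> e" using d(2) tv t uv by auto
          have n2: "norm (B u - B t) \<le> e" using d(2) tv t uv by auto
          have "B v ** S' t ** B u - B t ** S' t ** B t = (B v - B t) ** S' t ** B u + B t ** S' t ** (B u - B t)"
            by (simp add: mm_rdiff mm_ldiff)
          then have "norm (B v ** S' t ** B u - B t ** S' t ** B t) \<le> norm ((B v - B t) ** S' t ** B u) + norm (B t ** S' t ** (B u - B t))"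
            by (metis norm_triangle_ineq)
          also have "\<dots> \<le> K * K * norm (B v - B t) * norm (S' t) * norm (B u) + K * K * norm (B t) * norm (S' t) * norm (B u - B t)"
            using norm3[OF K] by (intro add_mono) auto
          also have "\<dots> \<le> K * K * e * norm (S' t) * M + K * K * M * norm (S' t) * e"
            using K(2) n1 n2 M(2)[OF tab] M(2)[OF uvab(1)] e M(1)
            by (intro add_mono mult_mono mult_left_mono mult_right_mono) auto
          also have "\<dots> = e * \<rho> t" by (simp add: \<rho>_def algebra_simps)
          finally show "norm (B v ** S' t ** B u - B t ** S' t ** B t) \<le> e * \<rho> t" .
        qed
        also have "\<dots> = e * integral {u..v} \<rho>" by simp
        finally show "norm (B v - B u - integral {u..v} (\<lambda>t. - (B t ** S' t ** B t))) \<le> e * integral {u..v} \<rho>" .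
      qed
    qed
  qed
  then show "(\<lambda>x. - (matrix_inv (S x) ** S' x ** matrix_inv (S x))) absolutely_integrable_on {a'..b'} \<and>
        matrix_inv (S b') - matrix_inv (S a') = integral {a'..b'} (\<lambda>x. - (matrix_inv (S x) ** S' x ** matrix_inv (S x)))"
    unfolding B_def .
qed




definition smul :: "'a::comm_ring_1 \<Rightarrow> 'a^'n^'m \<Rightarrow> 'a^'n^'m" where
  "smul c A = (\<chi> i j. c * A$i$j)"

lemma smul_mm_l [simp]: "smul c A ** B = smul c (A ** B)"
  by (simp add: smul_def matrix_matrix_mult_def vec_eq_iff sum_distrib_left mult_ac)
lemma smul_mm_r [simp]: "A ** smul c B = smul c (A ** B)"
  by (simp add: smul_def matrix_matrix_mult_def vec_eq_iff sum_distrib_left mult_ac)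
lemma mat_mm_l: "mat c ** A = smul c A"
proof -
  have "(\<Sum>k\<in>UNIV. (if i = k then c else 0) * A $ k $ j) = c * A $ i $ j" for i j
    by (simp add: if_distrib[where f="\<lambda>x. x * _"] cong: if_cong)
  then show ?thesis by (simp add: smul_def matrix_matrix_mult_def vec_eq_iff mat_def)
qed
lemma mat_mm_r: "A ** mat c = smul c A"
proof -
  have "(\<Sum>k\<in>UNIV. A $ i $ k * (if k = j then c else 0)) = c * A $ i $ j" for i j
    by (simp add: if_distrib[where f="\<lambda>x. _ * x"] mult.commute cong: if_cong)
  then show ?thesis by (simp add: smul_def matrix_matrix_mult_def vec_eq_iff mat_def)
qed
lemma smul_add [simp]: "smul c (A + B) = smul c A + smul c B"
  by (simp add: smul_def vec_eq_iff distrib_left)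
lemma smul_diff [simp]: "smul c (A - B) = smul c A - smul c B"
  by (simp add: smul_def vec_eq_iff right_diff_distrib)
lemma smul_neg [simp]: "smul c (- A) = - smul c A"
  by (simp add: smul_def vec_eq_iff)
lemma smul_zero [simp]: "smul c 0 = 0"
  by (simp add: smul_def vec_eq_iff)

lemmas mm_simps = mm_rdist mm_ldist mm_rdiff mm_ldiff mm_rneg mm_lneg matrix_mul_assoc

lemma key_alg:
  fixes P :: "complex^'n^2" and B S A1 A2 R :: "complex^'n^'n" and Pm :: "complex^2^'n"
    and Q0 Q1 F Ft :: "complex^2^2" and lam :: complex
  assumes SB: "S ** B = mat 1" "B ** S = mat 1"
    and RR: "(A1 - mat lam) ** R = mat 1" "R ** (A1 - mat lam) = mat 1"
    and id: "A1 ** S - S ** A2 = Pm ** P"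
    and F: "F = - Q0 - smul lam Q1" and Ft: "Ft = F + Q1 ** (P ** B ** Pm) - (P ** B ** Pm) ** Q1"
  shows "0 - ((((- (Q1 ** P ** A2) - Q0 ** P) ** B + P ** (- (B ** (Pm ** Q1 ** P) ** B))) ** R + P ** B ** 0) ** Pm
             + P ** B ** R ** (A1 ** Pm ** Q1 + Pm ** Q0))
         + (mat 1 - P ** B ** R ** Pm) ** F = Ft ** (mat 1 - P ** B ** R ** Pm)"
proof -
  have A2B: "A2 ** B = B ** A1 - B ** Pm ** P ** B"
  proof -
    have "B ** (A1 ** S - S ** A2) ** B = B ** (Pm ** P) ** B" using id by simp
    then have "B ** A1 ** (S ** B) - (B ** S) ** A2 ** B = B ** Pm ** P ** B"
      by (simp add: mm_simps)
    then have h: "B ** A1 - A2 ** B = B ** Pm ** P ** B" using SB by simp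
    have "A2 ** B = B ** A1 - (B ** A1 - A2 ** B)" by simp
    then show ?thesis by (simp only: h)
  qed
  have rA2B: "Z ** A2 ** B = Z ** B ** A1 - Z ** B ** Pm ** P ** B" for Z :: "complex^'n^2"
    using arg_cong[OF A2B, of "\<lambda>M. Z ** M"] by (simp add: mm_simps)
  have RA1: "R ** A1 = mat 1 + smul lam R"
  proof -
    have h: "R ** A1 - smul lam R = mat 1" using RR(2) by (simp add: mm_simps mat_mm_r)
    have "R ** A1 = (R ** A1 - smul lam R) + smul lam R" by simp
    then show ?thesis by (simp only: h)
  qed
  have A1R: "A1 ** R = mat 1 + smul lam R"
  proof -
    have h: "A1 ** R - smul lam R = mat 1" using RR(1) by (simp add: mm_simps mat_mm_l)
    have "A1 ** R = (A1 ** R - smul lam R) + smul lam R" by simp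
    then show ?thesis by (simp only: h)
  qed
  have rRA1: "Z ** R ** A1 = Z + smul lam (Z ** R)" for Z :: "complex^'n^2"
    using arg_cong[OF RA1, of "\<lambda>M. Z ** M"] by (simp add: mm_simps)
  have rA1R: "Z ** A1 ** R = Z + smul lam (Z ** R)" for Z :: "complex^'n^2"
    using arg_cong[OF A1R, of "\<lambda>M. Z ** M"] by (simp add: mm_simps)
  show ?thesis
    unfolding Ft F
    by (simp add: mm_simps rA2B rRA1 rA1R algebra_simps)
qed




lemma two_ne_one: "(2::2) \<noteq> 1" by simp

lemma F_eq: "mat2 r1 p (q - lam * w) r2 = - (- mat2 r1 p q r2) - smul lam (mat2 0 0 w 0)"
  by (simp add: vec_eq_iff forall_2 mat2_def smul_def)

lemma Ft_eq:
  fixes X :: "complex^2^2"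
  shows "mat2 (r1 - w * X$1$2) p (q + w * (X$1$1 - X$2$2) - lam * w) (r2 + w * X$1$2)
     = mat2 r1 p (q - lam * w) r2 + mat2 0 0 w 0 ** X - X ** mat2 0 0 w 0"
  by (simp add: vec_eq_iff forall_2 mat2_def matrix_matrix_mult_def sum_2 algebra_simps)

theorem proposition4p1:
  fixes ell :: ereal
    and pinv q r1 r2 \<omega> :: "real \<Rightarrow> complex"
    and lam :: complex
    and y :: "real \<Rightarrow> complex^2"
    and A1 A2 :: "complex^'n^'n"
    and \<Pi>1 \<Pi>2 :: "real \<Rightarrow> complex^2^'n"
    and S :: "real \<Rightarrow> complex^'n^'n"
  defines "I \<equiv> {x::real. 0 \<le> x \<and> ereal x < ell}"
  defines "F \<equiv> (\<lambda>x. mat2 (r1 x) (pinv x) (q x - lam * \<omega> x) (r2 x))"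
  defines "Q1 \<equiv> (\<lambda>x. mat2 0 0 (\<omega> x) 0)"
  defines "Q0 \<equiv> (\<lambda>x. - mat2 (r1 x) (pinv x) (q x) (r2 x))"
  defines "X \<equiv> (\<lambda>x. mat_star (\<Pi>2 x) ** matrix_inv (S x) ** \<Pi>1 x)"
  defines "wA \<equiv> (\<lambda>x. mat 1 - mat_star (\<Pi>2 x) ** matrix_inv (S x) ** matrix_inv (A1 - mat lam) ** \<Pi>1 x)"
  assumes l_pos: "0 < ell"
    and summ: "locally_summable_on I pinv" "locally_summable_on I q" "locally_summable_on I r1"
              "locally_summable_on I r2" "locally_summable_on I \<omega>"
    and y_sol: "ac_solution_on I y (\<lambda>x. F x *v y x)"
    and init: "A1 ** S 0 - S 0 ** A2 = \<Pi>1 0 ** mat_star (\<Pi>2 0)"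
    and Pi1_sol: "ac_solution_on I \<Pi>1 (\<lambda>x. A1 ** \<Pi>1 x ** Q1 x + \<Pi>1 x ** Q0 x)"
    and Pi2_sol: "ac_solution_on I (\<lambda>x. mat_star (\<Pi>2 x))
                    (\<lambda>x. - (Q1 x ** mat_star (\<Pi>2 x) ** A2) - Q0 x ** mat_star (\<Pi>2 x))"
    and S_sol: "ac_solution_on I S (\<lambda>x. \<Pi>1 x ** Q1 x ** mat_star (\<Pi>2 x))"
    and lam_reg: "invertible (A1 - mat lam)"
  shows "\<forall>a b. a \<le> b \<longrightarrow> {a..b} \<subseteq> {x\<in>I. invertible (S x)} \<longrightarrow>
           ac_solution_on {a..b} (\<lambda>x. wA x *v y x)
             (\<lambda>x. mat2 (r1 x - \<omega> x * X x $ 1 $ 2) (pinv x)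
                       (q x + \<omega> x * (X x $ 1 $ 1 - X x $ 2 $ 2) - lam * \<omega> x)
                       (r2 x + \<omega> x * X x $ 1 $ 2) *v (wA x *v y x))"
proof (intro allI impI)
  fix a b :: real assume ab: "a \<le> b" and sub: "{a..b} \<subseteq> {x\<in>I. invertible (S x)}"
  have subI: "{a..b} \<subseteq> I" using sub by auto
  have invS: "\<And>x. x \<in> {a..b} \<Longrightarrow> invertible (S x)" using sub by auto
  define R where "R = matrix_inv (A1 - mat lam)"
  have idx: "A1 ** S x - S x ** A2 = \<Pi>1 x ** mat_star (\<Pi>2 x)" if xI: "x \<in> I" for x
  proof -
    have x0: "0 \<le> x" using xI by (simp add: I_def)
    have sub0: "{0..x} \<subseteq> I"
    proof
      fix t assume t: "t \<in> {0..x}"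
      have "ereal t \<le> ereal x" using t by simp
      also have "ereal x < ell" using xI by (simp add: I_def)
      finally show "t \<in> I" using t by (simp add: I_def)
    qed
    have SA0: "ac_solution_on {0..x} S (\<lambda>x. \<Pi>1 x ** Q1 x ** mat_star (\<Pi>2 x))"
      by (rule ac_subI[OF S_sol sub0])
    have Pi1A0: "ac_solution_on {0..x} \<Pi>1 (\<lambda>x. A1 ** \<Pi>1 x ** Q1 x + \<Pi>1 x ** Q0 x)"
      by (rule ac_subI[OF Pi1_sol sub0])
    have PA0: "ac_solution_on {0..x} (\<lambda>x. mat_star (\<Pi>2 x)) (\<lambda>x. - (Q1 x ** mat_star (\<Pi>2 x) ** A2) - Q0 x ** mat_star (\<Pi>2 x))"
      by (rule ac_subI[OF Pi2_sol sub0])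
    have ZA: "ac_solution_on {0..x} (\<lambda>t. A1 ** S t - S t ** A2 - \<Pi>1 t ** mat_star (\<Pi>2 t))
       (\<lambda>t. (0 ** S t + A1 ** (\<Pi>1 t ** Q1 t ** mat_star (\<Pi>2 t))) - ((\<Pi>1 t ** Q1 t ** mat_star (\<Pi>2 t)) ** A2 + S t ** 0)
          - ((A1 ** \<Pi>1 t ** Q1 t + \<Pi>1 t ** Q0 t) ** mat_star (\<Pi>2 t) + \<Pi>1 t ** (- (Q1 t ** mat_star (\<Pi>2 t) ** A2) - Q0 t ** mat_star (\<Pi>2 t))))"
      using ac_diff[OF ac_diff[OF ac_prod[OF bilinear_mm ac_const SA0] ac_prod[OF bilinear_mm SA0 ac_const]]
         ac_prod[OF bilinear_mm Pi1A0 PA0]] by simp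
    have ZA': "ac_solution_on {0..x} (\<lambda>t. A1 ** S t - S t ** A2 - \<Pi>1 t ** mat_star (\<Pi>2 t)) (\<lambda>t. 0)"
      by (rule ac_cong[OF ZA]) (simp add: mm_simps algebra_simps)
    then have "(A1 ** S x - S x ** A2 - \<Pi>1 x ** mat_star (\<Pi>2 x)) - (A1 ** S 0 - S 0 ** A2 - \<Pi>1 0 ** mat_star (\<Pi>2 0)) = integral {0..x} (\<lambda>t. 0)"
      using x0 unfolding ac_solution_on_def by auto
    then show ?thesis using init by simp
  qed
  have yA: "ac_solution_on {a..b} y (\<lambda>x. F x *v y x)" by (rule ac_subI[OF y_sol subI])
  have SA: "ac_solution_on {a..b} S (\<lambda>x. \<Pi>1 x ** Q1 x ** mat_star (\<Pi>2 x))"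
    by (rule ac_subI[OF S_sol subI])
  have Pi1A: "ac_solution_on {a..b} \<Pi>1 (\<lambda>x. A1 ** \<Pi>1 x ** Q1 x + \<Pi>1 x ** Q0 x)"
    by (rule ac_subI[OF Pi1_sol subI])
  have PA: "ac_solution_on {a..b} (\<lambda>x. mat_star (\<Pi>2 x)) (\<lambda>x. - (Q1 x ** mat_star (\<Pi>2 x) ** A2) - Q0 x ** mat_star (\<Pi>2 x))"
    by (rule ac_subI[OF Pi2_sol subI])
  have BA: "ac_solution_on {a..b} (\<lambda>x. matrix_inv (S x))
      (\<lambda>x. - (matrix_inv (S x) ** (\<Pi>1 x ** Q1 x ** mat_star (\<Pi>2 x)) ** matrix_inv (S x)))"
    by (rule ac_inv[OF SA invS])
  have UA: "ac_solution_on {a..b} (\<lambda>x. (mat 1 - mat_star (\<Pi>2 x) ** matrix_inv (S x) ** R ** \<Pi>1 x) *v y x)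
     (\<lambda>x. (0 - ((((- (Q1 x ** mat_star (\<Pi>2 x) ** A2) - Q0 x ** mat_star (\<Pi>2 x)) ** matrix_inv (S x)
          + mat_star (\<Pi>2 x) ** (- (matrix_inv (S x) ** (\<Pi>1 x ** Q1 x ** mat_star (\<Pi>2 x)) ** matrix_inv (S x)))) ** R
          + mat_star (\<Pi>2 x) ** matrix_inv (S x) ** 0) ** \<Pi>1 x
          + mat_star (\<Pi>2 x) ** matrix_inv (S x) ** R ** (A1 ** \<Pi>1 x ** Q1 x + \<Pi>1 x ** Q0 x))) *v y x
        + (mat 1 - mat_star (\<Pi>2 x) ** matrix_inv (S x) ** R ** \<Pi>1 x) *v (F x *v y x))"
    using ac_prod[OF bilinear_mv ac_diff[OF ac_const ac_prod[OF bilinear_mm ac_prod[OF bilinear_mm ac_prod[OF bilinear_mm PA BA] ac_const] Pi1A]] yA]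
    by simp
  have UA2: "ac_solution_on {a..b} (\<lambda>x. wA x *v y x)
     (\<lambda>x. (0 - ((((- (Q1 x ** mat_star (\<Pi>2 x) ** A2) - Q0 x ** mat_star (\<Pi>2 x)) ** matrix_inv (S x)
          + mat_star (\<Pi>2 x) ** (- (matrix_inv (S x) ** (\<Pi>1 x ** Q1 x ** mat_star (\<Pi>2 x)) ** matrix_inv (S x)))) ** R
          + mat_star (\<Pi>2 x) ** matrix_inv (S x) ** 0) ** \<Pi>1 x
          + mat_star (\<Pi>2 x) ** matrix_inv (S x) ** R ** (A1 ** \<Pi>1 x ** Q1 x + \<Pi>1 x ** Q0 x))) *v y x
        + (mat 1 - mat_star (\<Pi>2 x) ** matrix_inv (S x) ** R ** \<Pi>1 x) *v (F x *v y x))"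
    by (rule ac_gcong[OF UA]) (simp add: wA_def R_def)
  show "ac_solution_on {a..b} (\<lambda>x. wA x *v y x)
             (\<lambda>x. mat2 (r1 x - \<omega> x * X x $ 1 $ 2) (pinv x)
                       (q x + \<omega> x * (X x $ 1 $ 1 - X x $ 2 $ 2) - lam * \<omega> x)
                       (r2 x + \<omega> x * X x $ 1 $ 2) *v (wA x *v y x))"
  proof (rule ac_cong[OF UA2])
    fix x assume x: "x \<in> {a..b}"
    have xI: "x \<in> I" using x subI by auto
    have RR: "(A1 - mat lam) ** R = mat 1" "R ** (A1 - mat lam) = mat 1"
      unfolding R_def using minv[OF lam_reg] by auto
    have Fx: "F x = - Q0 x - smul lam (Q1 x)"
      unfolding F_def Q0_def Q1_def by (rule F_eq)
    have Ftx: "mat2 (r1 x - \<omega> x * X x $ 1 $ 2) (pinv x) (q x + \<omega> x * (X x $ 1 $ 1 - X x $ 2 $ 2) - lam * \<omega> x)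
                       (r2 x + \<omega> x * X x $ 1 $ 2)
       = F x + Q1 x ** (mat_star (\<Pi>2 x) ** matrix_inv (S x) ** \<Pi>1 x) - (mat_star (\<Pi>2 x) ** matrix_inv (S x) ** \<Pi>1 x) ** Q1 x"
      unfolding F_def Q1_def
      using Ft_eq[where X="X x" and ?r1.0="r1 x" and w="\<omega> x" and p="pinv x" and q="q x" and lam=lam and ?r2.0="r2 x"]
      by (simp add: X_def)
    note key = key_alg[OF minv[OF invS[OF x]] RR idx[OF xI] Fx Ftx]
    show "(0 - ((((- (Q1 x ** mat_star (\<Pi>2 x) ** A2) - Q0 x ** mat_star (\<Pi>2 x)) ** matrix_inv (S x)
          + mat_star (\<Pi>2 x) ** (- (matrix_inv (S x) ** (\<Pi>1 x ** Q1 x ** mat_star (\<Pi>2 x)) ** matrix_inv (S x)))) ** R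
          + mat_star (\<Pi>2 x) ** matrix_inv (S x) ** 0) ** \<Pi>1 x
          + mat_star (\<Pi>2 x) ** matrix_inv (S x) ** R ** (A1 ** \<Pi>1 x ** Q1 x + \<Pi>1 x ** Q0 x))) *v y x
        + (mat 1 - mat_star (\<Pi>2 x) ** matrix_inv (S x) ** R ** \<Pi>1 x) *v (F x *v y x)
      = mat2 (r1 x - \<omega> x * X x $ 1 $ 2) (pinv x)
                       (q x + \<omega> x * (X x $ 1 $ 1 - X x $ 2 $ 2) - lam * \<omega> x)
                       (r2 x + \<omega> x * X x $ 1 $ 2) *v (wA x *v y x)"
      unfolding matrix_vector_mul_assoc matrix_vector_mult_add_rdistrib[symmetric] key
      by (simp add: wA_def R_def)
  qed
qed


end
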